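(* Let $q\in(0,1)$, let $\omega_1,\dots,\omega_m>0$ with $\sum_{i=1}^m\omega_i=1$, and let $X_1,\dots,X_m$ be positive random variables with continuous distributions $p_1,\dots,p_m$ and all with the same finite mean $\mathbb E[X_i]=\mu>0$. Let $X$ be a random variable with the mixture distribution $p=\sum_{i=1}^m\omega_i p_i$. Then $$\kappa_q(X)\ \ge\ \sum_{i=1}^m \omega_i\,\kappa_q(X_i).$$
   Context: For a positive random variable $Y$ with continuous distribution and finite mean, and $q\in(0,1)$, the exceedance threshold is $h_Y(q)=\inf\{h\ge 0:\ \mathbb P(Y>h)\le q\}$ and the (theoretical) quantile contribution is $$\kappa_q(Y)=q\,\frac{\mathbb E[Y\mid Y>h_Y(q)]}{\mathbb E[Y]}=\frac{\mathbb E[Y\mathbf 1_{Y>h_Y(q)}]}{\mathbb E[Y]}.$$ *)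

theory Defs
  imports "HOL-Probability.Probability"
begin

definition exc_threshold :: "'a measure \<Rightarrow> ('a \<Rightarrow> real) \<Rightarrow> real \<Rightarrow> real" where
  "exc_threshold M Y q = Inf {h. h \<ge> 0 \<and> measure M {x \<in> space M. Y x > h} \<le> q}"

definition quantile_contribution :: "'a measure \<Rightarrow> ('a \<Rightarrow> real) \<Rightarrow> real \<Rightarrow> real" where
  "quantile_contribution M Y q =
     (integral\<^sup>L M (\<lambda>x. if Y x > exc_threshold M Y q then Y x else 0)) / integral\<^sup>L M Y"

end

theory Submission
  imports Defs
begin


lemma mix_nn:
  fixes f :: "real \<Rightarrow> ennreal" and X :: "'b \<Rightarrow> real" and Xs :: "nat \<Rightarrow> 'a \<Rightarrow> real"
  assumes f: "f \<in> borel_measurable borel"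
    and XM: "X \<in> borel_measurable N"
    and XsM: "\<And>i. i \<in> I \<Longrightarrow> Xs i \<in> borel_measurable (M i)"
    and mix: "\<And>A. A \<in> sets borel \<Longrightarrow>
        emeasure N (X -` A \<inter> space N) = (\<Sum>i\<in>I. c i * emeasure (M i) (Xs i -` A \<inter> space (M i)))"
  shows "(\<integral>\<^sup>+x. f (X x) \<partial>N) = (\<Sum>i\<in>I. c i * (\<integral>\<^sup>+x. f (Xs i x) \<partial>M i))"
  using f
proof (induct rule: borel_measurable_induct)
  case (cong f g)
  then have "f = g" by auto
  then show ?case using cong by simp
next
  case (set A)
  have "(\<integral>\<^sup>+x. indicator A (X x) \<partial>N) = (\<integral>\<^sup>+x. indicator (X -` A \<inter> space N) x \<partial>N)"
    by (rule nn_integral_cong) (auto split: split_indicator)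
  also have "\<dots> = emeasure N (X -` A \<inter> space N)"
    using set XM by (intro nn_integral_indicator) (simp add: measurable_sets)
  also have "\<dots> = (\<Sum>i\<in>I. c i * emeasure (M i) (Xs i -` A \<inter> space (M i)))" using mix set by simp
  also have "\<dots> = (\<Sum>i\<in>I. c i * (\<integral>\<^sup>+x. indicator A (Xs i x) \<partial>M i))"
  proof (rule sum.cong[OF refl])
    fix i assume i: "i \<in> I"
    have "(\<integral>\<^sup>+x. indicator A (Xs i x) \<partial>M i) = (\<integral>\<^sup>+x. indicator (Xs i -` A \<inter> space (M i)) x \<partial>M i)"
      by (rule nn_integral_cong) (auto split: split_indicator)
    also have "\<dots> = emeasure (M i) (Xs i -` A \<inter> space (M i))"
      using set XsM[OF i] by (intro nn_integral_indicator) (simp add: measurable_sets)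
    finally show "c i * emeasure (M i) (Xs i -` A \<inter> space (M i)) = c i * (\<integral>\<^sup>+x. indicator A (Xs i x) \<partial>M i)" by simp
  qed
  finally show ?case .
next
  case (mult u a)
  have "(\<integral>\<^sup>+x. a * u (X x) \<partial>N) = a * (\<integral>\<^sup>+x. u (X x) \<partial>N)"
    using measurable_compose[OF XM mult(2)] by (rule nn_integral_cmult)
  also have "\<dots> = (\<Sum>i\<in>I. c i * (\<integral>\<^sup>+x. a * u (Xs i x) \<partial>M i))"
    unfolding mult(4) sum_distrib_left
  proof (rule sum.cong[OF refl])
    fix i assume i: "i \<in> I"
    have "(\<integral>\<^sup>+x. a * u (Xs i x) \<partial>M i) = a * (\<integral>\<^sup>+x. u (Xs i x) \<partial>M i)"
      using measurable_compose[OF XsM[OF i] mult(2)] by (rule nn_integral_cmult)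
    then show "a * (c i * (\<integral>\<^sup>+x. u (Xs i x) \<partial>M i)) = c i * (\<integral>\<^sup>+x. a * u (Xs i x) \<partial>M i)"
      by (simp add: ac_simps)
  qed
  finally show ?case .
next
  case (add u v)
  have "(\<integral>\<^sup>+x. v (X x) + u (X x) \<partial>N) = (\<integral>\<^sup>+x. v (X x) \<partial>N) + (\<integral>\<^sup>+x. u (X x) \<partial>N)"
    using measurable_compose[OF XM add(4)] measurable_compose[OF XM add(1)] by (rule nn_integral_add)
  also have "\<dots> = (\<Sum>i\<in>I. c i * (\<integral>\<^sup>+x. v (Xs i x) + u (Xs i x) \<partial>M i))"
    unfolding add(3) add(7) sum.distrib[symmetric]
  proof (rule sum.cong[OF refl])
    fix i assume i: "i \<in> I"
    have "(\<integral>\<^sup>+x. v (Xs i x) + u (Xs i x) \<partial>M i) = (\<integral>\<^sup>+x. v (Xs i x) \<partial>M i) + (\<integral>\<^sup>+x. u (Xs i x) \<partial>M i)"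
      using measurable_compose[OF XsM[OF i] add(4)] measurable_compose[OF XsM[OF i] add(1)] by (rule nn_integral_add)
    then show "c i * (\<integral>\<^sup>+x. v (Xs i x) \<partial>M i) + c i * (\<integral>\<^sup>+x. u (Xs i x) \<partial>M i) =
        c i * (\<integral>\<^sup>+x. v (Xs i x) + u (Xs i x) \<partial>M i)"
      by (simp add: distrib_left)
  qed
  finally show ?case .
next
  case (seq U)
  have "(\<integral>\<^sup>+x. (SUP n. U n) (X x) \<partial>N) = (\<integral>\<^sup>+x. (SUP n. U n (X x)) \<partial>N)" by (simp add: image_comp)
  also have "\<dots> = (SUP n. \<integral>\<^sup>+x. U n (X x) \<partial>N)"
    using seq measurable_compose[OF XM seq(1)] by (intro nn_integral_monotone_convergence_SUP) (auto simp: incseq_def le_fun_def)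
  also have "\<dots> = (SUP n. \<Sum>i\<in>I. c i * (\<integral>\<^sup>+x. U n (Xs i x) \<partial>M i))" using seq(3) by simp
  also have "\<dots> = (\<Sum>i\<in>I. SUP n. c i * (\<integral>\<^sup>+x. U n (Xs i x) \<partial>M i))"
    using seq(4) by (intro ennreal_SUP_sum)
      (auto simp: incseq_def le_fun_def intro!: mult_left_mono nn_integral_mono)
  also have "\<dots> = (\<Sum>i\<in>I. c i * (\<integral>\<^sup>+x. (SUP n. U n) (Xs i x) \<partial>M i))"
  proof (rule sum.cong[OF refl])
    fix i assume i: "i \<in> I"
    have "(\<integral>\<^sup>+x. (SUP n. U n (Xs i x)) \<partial>M i) = (SUP n. \<integral>\<^sup>+x. U n (Xs i x) \<partial>M i)"
      using seq measurable_compose[OF XsM[OF i] seq(1)] by (intro nn_integral_monotone_convergence_SUP) (auto simp: incseq_def le_fun_def)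
    then show "(SUP n. c i * (\<integral>\<^sup>+x. U n (Xs i x) \<partial>M i)) = c i * (\<integral>\<^sup>+x. (SUP n. U n) (Xs i x) \<partial>M i)"
      by (simp add: SUP_mult_left_ennreal image_comp)
  qed
  finally show ?case .
qed



lemma thr:
  fixes Y :: "'a \<Rightarrow> real"
  assumes P: "prob_space M" and Ym: "Y \<in> borel_measurable M"
    and cont: "\<And>y. measure M {x\<in>space M. Y x = y} = 0"
    and pos: "measure M {x\<in>space M. Y x > 0} = 1"
    and q: "0 < q" "q < 1"
  shows "exc_threshold M Y q \<ge> 0 \<and> measure M {x\<in>space M. Y x > exc_threshold M Y q} = q"
proof -
  interpret prob_space M by (rule P)
  define D where "D = distr M borel Y"
  interpret D: real_distribution D unfolding D_def using Ym by simp
  define G where "G h = measure M {x\<in>space M. Y x > h}" for h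
  have G_eq: "G h = 1 - cdf D h" for h
  proof -
    have "cdf D h = measure M (Y -` {..h} \<inter> space M)"
      unfolding cdf_def D_def using Ym by (subst measure_distr) auto
    also have "Y -` {..h} \<inter> space M = space M - {x\<in>space M. Y x > h}" by auto
    also have "measure M \<dots> = 1 - G h"
      unfolding G_def using Ym by (subst prob_compl) auto
    finally show ?thesis by simp
  qed
  have Gc: "isCont G h" for h
  proof -
    have "measure D {h} = measure M {x\<in>space M. Y x = h}"
      unfolding D_def using Ym by (subst measure_distr) (auto intro!: arg_cong[where f="measure M"])
    then have "isCont (cdf D) h" using cont by (simp add: D.isCont_cdf)
    then show ?thesis unfolding G_eq[abs_def] by (intro continuous_intros)
  qed
  have Glim: "(G \<longlongrightarrow> 0) at_top"
    unfolding G_eq[abs_def] using tendsto_diff[OF tendsto_const D.cdf_lim_at_top_prob, of 1] by simp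
  define S where "S = {h. h \<ge> 0 \<and> G h \<le> q}"
  have thr_eq: "exc_threshold M Y q = Inf S" unfolding exc_threshold_def S_def G_def by simp
  have "eventually (\<lambda>h. G h < q) at_top" using Glim q by (intro order_tendstoD) auto
  then obtain H where H: "\<And>h. h \<ge> H \<Longrightarrow> G h < q" by (auto simp: eventually_at_top_linorder)
  have "max H 0 \<in> S" using H[of "max H 0"] unfolding S_def by auto
  then have ne: "S \<noteq> {}" by auto
  have bdd: "bdd_below S" unfolding S_def by (auto intro: bdd_belowI[where m=0])
  have cl: "closed S"
  proof -
    have "continuous_on UNIV G" using Gc by (simp add: continuous_at_imp_continuous_on)
    then have "closed {h. G h \<le> q}" by (intro closed_Collect_le continuous_intros) auto
    moreover have "closed {h::real. 0 \<le> h}" by (intro closed_Collect_le continuous_intros)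
    ultimately show ?thesis unfolding S_def by (simp add: Collect_conj_eq closed_Int)
  qed
  have inS: "Inf S \<in> S" using closed_contains_Inf[OF ne bdd cl] .
  define t where "t = Inf S"
  have t0: "t \<ge> 0" and Gt: "G t \<le> q" using inS unfolding S_def t_def by auto
  have G0: "G 0 = 1" using pos unfolding G_def by simp
  have tpos: "t > 0" using t0 Gt G0 q by (cases "t = 0") auto
  have "G t = q"
  proof (rule ccontr)
    assume "G t \<noteq> q"
    then have lt: "G t < q" using Gt by simp
    have "\<forall>\<^sub>F h in at t. G h < q"
      using Gc[of t] lt unfolding isCont_def by (intro order_tendstoD) auto
    then obtain d where d: "d > 0" "\<And>h. h \<noteq> t \<Longrightarrow> dist h t < d \<Longrightarrow> G h < q"
      by (auto simp: eventually_at)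
    define h where "h = t - min d t / 2"
    have "h \<in> S" unfolding S_def h_def using d tpos
      by (auto intro!: less_imp_le[OF d(2)] simp: dist_real_def)
    then have "t \<le> h" unfolding t_def using bdd by (rule cInf_lower)
    then show False unfolding h_def using d tpos by simp
  qed
  then show ?thesis using t0 unfolding thr_eq t_def G_def by simp
qed



lemma tail_ineq:
  fixes Y :: "'a \<Rightarrow> real"
  assumes P: "prob_space M" and Ym: "Y \<in> borel_measurable M" and Yi: "integrable M Y"
  shows "integral\<^sup>L M (\<lambda>x. if Y x > h then Y x else 0) - integral\<^sup>L M (\<lambda>x. if Y x > h' then Y x else 0)
     \<ge> h * (measure M {x\<in>space M. Y x > h} - measure M {x\<in>space M. Y x > h'})"
proof -
  interpret prob_space M by (rule P)
  have gi: "integrable M (\<lambda>x. if Y x > a then Y x else 0)" for a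
    by (rule Bochner_Integration.integrable_bound[OF Yi]) (use Ym in auto)
  have mA: "{x\<in>space M. Y x > a} \<in> sets M" for a using Ym by measurable
  have "h * (measure M {x\<in>space M. Y x > h} - measure M {x\<in>space M. Y x > h'})
      = integral\<^sup>L M (\<lambda>x. h * (indicator {x\<in>space M. Y x > h} x - indicator {x\<in>space M. Y x > h'} x))"
    using mA by (simp add: Bochner_Integration.integral_diff[OF integrable_indicator integrable_indicator] emeasure_eq_measure Int_absorb2 sets.sets_into_space)
  also have "\<dots> \<le> integral\<^sup>L M (\<lambda>x. (if Y x > h then Y x else 0) - (if Y x > h' then Y x else 0))"
  proof (rule integral_mono)
    show "integrable M (\<lambda>x. h * (indicator {x\<in>space M. Y x > h} x - indicator {x\<in>space M. Y x > h'} x))"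
      using mA by (intro integrable_mult_right Bochner_Integration.integrable_diff integrable_indicator)
        (auto simp: emeasure_eq_measure)
    show "integrable M (\<lambda>x. (if Y x > h then Y x else 0) - (if Y x > h' then Y x else 0))"
      using gi[of h] gi[of h'] by (rule Bochner_Integration.integrable_diff)
  qed (auto simp: indicator_def)
  also have "\<dots> = integral\<^sup>L M (\<lambda>x. if Y x > h then Y x else 0) - integral\<^sup>L M (\<lambda>x. if Y x > h' then Y x else 0)"
    by (rule Bochner_Integration.integral_diff[OF gi gi])
  finally show ?thesis .
qed



lemma mix_real:
  fixes g :: "real \<Rightarrow> real" and X :: "'b \<Rightarrow> real" and Xs :: "nat \<Rightarrow> 'a \<Rightarrow> real"
  assumes g: "g \<in> borel_measurable borel" and gnn: "\<And>t. g t \<ge> 0"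
    and XM: "X \<in> borel_measurable N"
    and XsM: "\<And>i. i \<in> I \<Longrightarrow> Xs i \<in> borel_measurable (M i)"
    and c: "\<And>i. i \<in> I \<Longrightarrow> c i \<ge> 0"
    and gi: "\<And>i. i \<in> I \<Longrightarrow> integrable (M i) (\<lambda>x. g (Xs i x))"
    and mix: "\<And>A. A \<in> sets borel \<Longrightarrow>
        emeasure N (X -` A \<inter> space N) = (\<Sum>i\<in>I. ennreal (c i) * emeasure (M i) (Xs i -` A \<inter> space (M i)))"
  shows "integrable N (\<lambda>x. g (X x)) \<and> integral\<^sup>L N (\<lambda>x. g (X x)) = (\<Sum>i\<in>I. c i * integral\<^sup>L (M i) (\<lambda>x. g (Xs i x)))"
proof -
  have gXm: "(\<lambda>x. g (X x)) \<in> borel_measurable N" using measurable_compose[OF XM g] .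
  have "(\<integral>\<^sup>+x. ennreal (g (X x)) \<partial>N) = (\<Sum>i\<in>I. ennreal (c i) * (\<integral>\<^sup>+x. ennreal (g (Xs i x)) \<partial>M i))"
    using mix_nn[of "\<lambda>t. ennreal (g t)" X N I Xs M "\<lambda>i. ennreal (c i)"] g XM XsM mix by auto
  also have "\<dots> = (\<Sum>i\<in>I. ennreal (c i * integral\<^sup>L (M i) (\<lambda>x. g (Xs i x))))"
  proof (rule sum.cong[OF refl])
    fix i assume i: "i \<in> I"
    have "(\<integral>\<^sup>+x. ennreal (g (Xs i x)) \<partial>M i) = ennreal (integral\<^sup>L (M i) (\<lambda>x. g (Xs i x)))"
      using gi[OF i] gnn by (intro nn_integral_eq_integral) auto
    then show "ennreal (c i) * (\<integral>\<^sup>+x. ennreal (g (Xs i x)) \<partial>M i) = ennreal (c i * integral\<^sup>L (M i) (\<lambda>x. g (Xs i x)))"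
      using c[OF i] gnn by (simp add: ennreal_mult integral_nonneg_AE)
  qed
  also have "\<dots> = ennreal (\<Sum>i\<in>I. c i * integral\<^sup>L (M i) (\<lambda>x. g (Xs i x)))"
    using c gnn by (intro sum_ennreal) (simp add: integral_nonneg_AE)
  finally have eq: "(\<integral>\<^sup>+x. ennreal (g (X x)) \<partial>N) = ennreal (\<Sum>i\<in>I. c i * integral\<^sup>L (M i) (\<lambda>x. g (Xs i x)))" .
  have int: "integrable N (\<lambda>x. g (X x))"
    using gXm gnn eq by (intro integrableI_nonneg) auto
  have "ennreal (integral\<^sup>L N (\<lambda>x. g (X x))) = ennreal (\<Sum>i\<in>I. c i * integral\<^sup>L (M i) (\<lambda>x. g (Xs i x)))"
    using nn_integral_eq_integral[OF int] gnn eq by auto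
  moreover have "(\<Sum>i\<in>I. c i * integral\<^sup>L (M i) (\<lambda>x. g (Xs i x))) \<ge> 0"
    using c gnn by (intro sum_nonneg mult_nonneg_nonneg) (auto simp: integral_nonneg_AE)
  ultimately show ?thesis using int gnn by (simp add: integral_nonneg_AE)
qed


theorem mainTheorem4:
  fixes q \<mu> :: real and m :: nat and \<omega> :: "nat \<Rightarrow> real"
    and M :: "nat \<Rightarrow> 'a measure" and Xs :: "nat \<Rightarrow> 'a \<Rightarrow> real"
    and N :: "'b measure" and X :: "'b \<Rightarrow> real"
  assumes q: "0 < q" "q < 1"
    and \<omega>_pos: "\<And>i. i \<in> {1..m} \<Longrightarrow> \<omega> i > 0"
    and \<omega>_sum: "(\<Sum>i=1..m. \<omega> i) = 1"
    and M_prob: "\<And>i. i \<in> {1..m} \<Longrightarrow> prob_space (M i)"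
    and Xs_meas: "\<And>i. i \<in> {1..m} \<Longrightarrow> Xs i \<in> borel_measurable (M i)"
    and Xs_pos: "\<And>i. i \<in> {1..m} \<Longrightarrow> AE x in M i. Xs i x > 0"
    and Xs_cont: "\<And>i y. i \<in> {1..m} \<Longrightarrow> measure (M i) {x \<in> space (M i). Xs i x = y} = 0"
    and Xs_int: "\<And>i. i \<in> {1..m} \<Longrightarrow> integrable (M i) (Xs i)"
    and Xs_mean: "\<And>i. i \<in> {1..m} \<Longrightarrow> integral\<^sup>L (M i) (Xs i) = \<mu>"
    and \<mu>_pos: "\<mu> > 0"
    and N_prob: "prob_space N"
    and X_meas: "X \<in> borel_measurable N"
    and X_mix: "\<And>A. A \<in> sets borel \<Longrightarrow>
        measure N (X -` A \<inter> space N) = (\<Sum>i=1..m. \<omega> i * measure (M i) (Xs i -` A \<inter> space (M i)))"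
  shows "quantile_contribution N X q \<ge> (\<Sum>i=1..m. \<omega> i * quantile_contribution (M i) (Xs i) q)"
proof -
  interpret N: prob_space N by (rule N_prob)
  define I where "I = {1..m}"
  have emix: "emeasure N (X -` A \<inter> space N) = (\<Sum>i\<in>I. ennreal (\<omega> i) * emeasure (M i) (Xs i -` A \<inter> space (M i)))"
    if A: "A \<in> sets borel" for A
  proof -
    have "emeasure N (X -` A \<inter> space N) = ennreal (\<Sum>i\<in>I. \<omega> i * measure (M i) (Xs i -` A \<inter> space (M i)))"
      using X_mix[OF A] by (simp add: N.emeasure_eq_measure I_def)
    also have "\<dots> = (\<Sum>i\<in>I. ennreal (\<omega> i * measure (M i) (Xs i -` A \<inter> space (M i))))"
      using \<omega>_pos by (intro sum_ennreal[symmetric]) (auto simp: I_def less_imp_le)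
    also have "\<dots> = (\<Sum>i\<in>I. ennreal (\<omega> i) * emeasure (M i) (Xs i -` A \<inter> space (M i)))"
      using \<omega>_pos M_prob by (intro sum.cong refl)
        (auto simp: I_def ennreal_mult less_imp_le finite_measure.emeasure_eq_measure prob_space.finite_measure)
    finally show ?thesis .
  qed
  have XsM: "\<And>i. i \<in> I \<Longrightarrow> Xs i \<in> borel_measurable (M i)" using Xs_meas by (simp add: I_def)
  have cI: "\<And>i. i \<in> I \<Longrightarrow> \<omega> i \<ge> 0" using \<omega>_pos by (auto simp: I_def less_imp_le)
  have Xcont: "measure N {x\<in>space N. X x = y} = 0" for y
  proof -
    have "{x\<in>space N. X x = y} = X -` {y} \<inter> space N" by auto
    moreover have "(\<Sum>i=1..m. \<omega> i * measure (M i) (Xs i -` {y} \<inter> space (M i))) = 0"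
    proof (rule sum.neutral, rule ballI)
      fix i assume i: "i \<in> {1..m}"
      have "Xs i -` {y} \<inter> space (M i) = {x\<in>space (M i). Xs i x = y}" by auto
      then show "\<omega> i * measure (M i) (Xs i -` {y} \<inter> space (M i)) = 0" using Xs_cont[OF i] by simp
    qed
    ultimately show ?thesis using X_mix[of "{y}"] by simp
  qed
  have Xspos1: "measure (M i) {x\<in>space (M i). Xs i x > 0} = 1" if i: "i \<in> {1..m}" for i
    using prob_space.prob_Collect_eq_1[OF M_prob[OF i], of "\<lambda>x. Xs i x > 0"] Xs_pos[OF i] Xs_meas[OF i]
    by simp
  have Xpos1: "measure N {x\<in>space N. X x > 0} = 1"
  proof -
    have "{x\<in>space N. X x > 0} = X -` {0<..} \<inter> space N" by auto
    moreover have "(\<Sum>i=1..m. \<omega> i * measure (M i) (Xs i -` {0<..} \<inter> space (M i))) = (\<Sum>i=1..m. \<omega> i)"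
    proof (rule sum.cong[OF refl])
      fix i assume i: "i \<in> {1..m}"
      have "Xs i -` {0<..} \<inter> space (M i) = {x\<in>space (M i). Xs i x > 0}" by auto
      then show "\<omega> i * measure (M i) (Xs i -` {0<..} \<inter> space (M i)) = \<omega> i" using Xspos1[OF i] by simp
    qed
    ultimately show ?thesis using X_mix[of "{0<..}"] \<omega>_sum by simp
  qed
  have XposAE: "AE x in N. X x > 0"
    using N.prob_Collect_eq_1[of "\<lambda>x. X x > 0"] Xpos1 X_meas by simp
  define h where "h = exc_threshold N X q"
  have h: "h \<ge> 0" "measure N {x\<in>space N. X x > h} = q"
    using thr[OF N_prob X_meas Xcont Xpos1 q] unfolding h_def by auto
  define hs where "hs i = exc_threshold (M i) (Xs i) q" for i
  have hs: "measure (M i) {x\<in>space (M i). Xs i x > hs i} = q" if i: "i \<in> {1..m}" for i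
    using thr[OF M_prob[OF i] Xs_meas[OF i] Xs_cont[OF i] Xspos1[OF i] q] unfolding hs_def by auto
  have mean: "integral\<^sup>L N X = \<mu>"
  proof -
    have "integral\<^sup>L N X = integral\<^sup>L N (\<lambda>x. max 0 (X x))"
    proof (rule integral_cong_AE)
      show "(\<lambda>x. max 0 (X x)) \<in> borel_measurable N" using X_meas by measurable
    qed (use XposAE X_meas in auto)
    also have "\<dots> = (\<Sum>i\<in>I. \<omega> i * integral\<^sup>L (M i) (\<lambda>x. max 0 (Xs i x)))"
    proof -
      have "\<And>i. i \<in> I \<Longrightarrow> integrable (M i) (\<lambda>x. max 0 (Xs i x))"
        using Xs_int Xs_meas by (auto simp: I_def)
      then show ?thesis
        using mix_real[of "\<lambda>t. max 0 t" X N I Xs M \<omega>] X_meas XsM cI emix by auto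
    qed
    also have "\<dots> = (\<Sum>i\<in>I. \<omega> i * \<mu>)"
    proof (rule sum.cong[OF refl])
      fix i assume i: "i \<in> I"
      have "integral\<^sup>L (M i) (\<lambda>x. max 0 (Xs i x)) = integral\<^sup>L (M i) (Xs i)"
        using Xs_pos[of i] i Xs_meas[of i] by (intro integral_cong_AE) (auto simp: I_def)
      then show "\<omega> i * integral\<^sup>L (M i) (\<lambda>x. max 0 (Xs i x)) = \<omega> i * \<mu>" using Xs_mean[of i] i by (simp add: I_def)
    qed
    also have "\<dots> = \<mu>" using \<omega>_sum by (simp add: I_def sum_distrib_right[symmetric])
    finally show ?thesis .
  qed
  define g where "g a t = (if t > a then t else (0::real))" for a t
  have tail: "integral\<^sup>L N (\<lambda>x. g h (X x)) = (\<Sum>i\<in>I. \<omega> i * integral\<^sup>L (M i) (\<lambda>x. g h (Xs i x)))"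
  proof -
    have gm: "g h \<in> borel_measurable borel" unfolding g_def by measurable
    have gnn: "\<And>t. g h t \<ge> 0" using h(1) by (simp add: g_def)
    have "\<And>i. i \<in> I \<Longrightarrow> integrable (M i) (\<lambda>x. g h (Xs i x))"
      unfolding g_def by (rule Bochner_Integration.integrable_bound[OF Xs_int]) (use Xs_meas in \<open>auto simp: I_def\<close>)
    then show ?thesis using mix_real[of "g h" X N I Xs M \<omega>] gm gnn X_meas XsM cI emix by auto
  qed
  have Pmix: "measure N {x\<in>space N. X x > h} = (\<Sum>i\<in>I. \<omega> i * measure (M i) {x\<in>space (M i). Xs i x > h})"
  proof -
    have "{x\<in>space N. X x > h} = X -` {h<..} \<inter> space N" by auto
    moreover have "\<And>i. Xs i -` {h<..} \<inter> space (M i) = {x\<in>space (M i). Xs i x > h}" by auto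
    ultimately show ?thesis using X_mix[of "{h<..}"] by (simp add: I_def)
  qed
  have key: "(\<Sum>i\<in>I. \<omega> i * integral\<^sup>L (M i) (\<lambda>x. g (hs i) (Xs i x))) \<le> integral\<^sup>L N (\<lambda>x. g h (X x))"
  proof -
    have "(\<Sum>i\<in>I. \<omega> i * integral\<^sup>L (M i) (\<lambda>x. g (hs i) (Xs i x)))
        \<le> (\<Sum>i\<in>I. \<omega> i * (integral\<^sup>L (M i) (\<lambda>x. g h (Xs i x)) - h * (measure (M i) {x\<in>space (M i). Xs i x > h} - q)))"
    proof (rule sum_mono)
      fix i assume i: "i \<in> I"
      have "integral\<^sup>L (M i) (\<lambda>x. g h (Xs i x)) - integral\<^sup>L (M i) (\<lambda>x. g (hs i) (Xs i x))
          \<ge> h * (measure (M i) {x\<in>space (M i). Xs i x > h} - measure (M i) {x\<in>space (M i). Xs i x > hs i})"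
        unfolding g_def using tail_ineq[OF M_prob Xs_meas Xs_int] i by (auto simp: I_def)
      then show "\<omega> i * integral\<^sup>L (M i) (\<lambda>x. g (hs i) (Xs i x))
          \<le> \<omega> i * (integral\<^sup>L (M i) (\<lambda>x. g h (Xs i x)) - h * (measure (M i) {x\<in>space (M i). Xs i x > h} - q))"
        using hs[of i] i cI[OF i] by (intro mult_left_mono) (auto simp: I_def)
    qed
    also have "\<dots> = (\<Sum>i\<in>I. \<omega> i * integral\<^sup>L (M i) (\<lambda>x. g h (Xs i x)))
        - h * ((\<Sum>i\<in>I. \<omega> i * measure (M i) {x\<in>space (M i). Xs i x > h}) - q * (\<Sum>i\<in>I. \<omega> i))"
      by (simp add: algebra_simps sum_subtractf sum_distrib_left sum_distrib_right sum.distrib)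
    also have "\<dots> = integral\<^sup>L N (\<lambda>x. g h (X x))"
      using tail Pmix[symmetric] h(2) \<omega>_sum by (simp add: I_def)
    finally show ?thesis .
  qed
  have "(\<Sum>i=1..m. \<omega> i * quantile_contribution (M i) (Xs i) q)
      = (\<Sum>i\<in>I. \<omega> i * integral\<^sup>L (M i) (\<lambda>x. g (hs i) (Xs i x))) / \<mu>"
    unfolding quantile_contribution_def sum_divide_distrib I_def
    by (intro sum.cong refl) (auto simp: Xs_mean g_def hs_def)
  also have "\<dots> \<le> integral\<^sup>L N (\<lambda>x. g h (X x)) / \<mu>"
    using key \<mu>_pos by (intro divide_right_mono) auto
  also have "\<dots> = quantile_contribution N X q"
    unfolding quantile_contribution_def mean h_def g_def by simp
  finally show ?thesis .
qed

end
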